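(* Let $\lambda>0$ and integers $p\ge0$, $0\le k\le p+1$. Then $\{h^\lambda_{j,p}:0\le j<k\}$ is a basis of $V_{k,\lambda}(p)$, where $h^\lambda_{j,p}(z,w)=\sum_{j\le i\le p}\binom ij\binom{p-i+\lambda-1}{p-i}z^iw^{p-i}$.
   Context: For $\lambda>0$, $\mathcal H^{(\lambda)}$ is the Hilbert space of holomorphic functions on $\mathbb D$ with reproducing kernel $(1-z\bar w)^{-\lambda}$, and $H^2$ the Hardy space. $\mathcal H^{(\lambda)}\otimes H^2$ is identified with a Hilbert space of holomorphic functions on $\mathbb D^2$ via $f\otimes g\mapsto((z,w)\mapsto g(z)f(w))$. $Hom(p)$ is the space of homogeneous polynomials of degree $p$ in $z,w$, so that $\mathcal H^{(\lambda)}\otimes H^2=\bigoplus_{p\ge0}Hom(p)$ orthogonally. Let $\triangle=\{(z,z):z\in\mathbb D\}$. $V_{k,\lambda}$ is the orthogonal complement in $\mathcal H^{(\lambda)}\otimes H^2$ of the set of all $h\in\mathcal H^{(\lambda)}\otimes H^2$ vanishing to order $\ge k$ on $\triangle$ (i.e. all partial derivatives of $h$ of order $<k$ vanish on $\triangle$), and $V_{k,\lambda}(p)=Hom(p)\cap V_{k,\lambda}$. *)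

theory Defs
  imports "HOL-Analysis.Analysis"
begin

text \<open>Concrete model of the Hilbert space H^(lam) (x) H^2 on the bidisc:
  an element is given by its Taylor coefficients a i j of z^i w^j, where the
  z-variable carries the Hardy space H^2 (norm of z^i is 1) and the w-variable carries
  H^(lam) (squared norm of w^j is j!/(lam)_j, from the kernel (1 - z conj w)^(-lam)).\<close>

type_synonym coeffs = "nat \<Rightarrow> nat \<Rightarrow> complex"

definition wt :: "real \<Rightarrow> nat \<Rightarrow> real" where
  "wt lam j = fact j / pochhammer lam j"

definition Hspace :: "real \<Rightarrow> coeffs set" where
  "Hspace lam = {a. (\<lambda>(i,j). (cmod (a i j))\<^sup>2 * wt lam j) summable_on UNIV}"

definition ip :: "real \<Rightarrow> coeffs \<Rightarrow> coeffs \<Rightarrow> complex" where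
  "ip lam a b = (\<Sum>\<^sub>\<infinity>(i,j). a i j * cnj (b i j) * of_real (wt lam j))"

definition fn :: "coeffs \<Rightarrow> complex \<Rightarrow> complex \<Rightarrow> complex" where
  "fn a z w = (\<Sum>\<^sub>\<infinity>(i,j). a i j * z ^ i * w ^ j)"

definition pder :: "nat \<Rightarrow> nat \<Rightarrow> (complex \<Rightarrow> complex \<Rightarrow> complex) \<Rightarrow> complex \<Rightarrow> complex \<Rightarrow> complex" where
  "pder m n F z w = (deriv ^^ m) (\<lambda>z'. (deriv ^^ n) (\<lambda>w'. F z' w') w) z"

definition vanish_diag :: "nat \<Rightarrow> coeffs \<Rightarrow> bool" where
  "vanish_diag k a \<longleftrightarrow> (\<forall>m n z. m + n < k \<longrightarrow> z \<in> ball 0 1 \<longrightarrow> pder m n (fn a) z z = 0)"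

definition V :: "nat \<Rightarrow> real \<Rightarrow> coeffs set" where
  "V k lam = {a \<in> Hspace lam. \<forall>b \<in> Hspace lam. vanish_diag k b \<longrightarrow> ip lam a b = 0}"

definition Hom :: "real \<Rightarrow> nat \<Rightarrow> coeffs set" where
  "Hom lam p = {a \<in> Hspace lam. \<forall>i j. i + j \<noteq> p \<longrightarrow> a i j = 0}"

definition Vp :: "nat \<Rightarrow> real \<Rightarrow> nat \<Rightarrow> coeffs set" where
  "Vp k lam p = Hom lam p \<inter> V k lam"

definition hcoef :: "real \<Rightarrow> nat \<Rightarrow> nat \<Rightarrow> coeffs" where
  "hcoef lam j p = (\<lambda>i l. if i + l = p \<and> j \<le> i
      then of_real (real (i choose j) * ((real (p - i) + lam - 1) gchoose (p - i))) else 0)"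

end

theory Submission
  imports Defs "HOL-Complex_Analysis.Complex_Analysis"
begin


inductive pol :: "(complex \<Rightarrow> complex \<Rightarrow> complex) \<Rightarrow> bool" where
  pconst: "pol (\<lambda>z w. c)"
| pz: "pol (\<lambda>z w. z)"
| pw: "pol (\<lambda>z w. w)"
| padd: "pol F \<Longrightarrow> pol G \<Longrightarrow> pol (\<lambda>z w. F z w + G z w)"
| pmul: "pol F \<Longrightarrow> pol G \<Longrightarrow> pol (\<lambda>z w. F z w * G z w)"

lemma pol_deriv_w:
  assumes "pol F"
  shows "\<exists>G. pol G \<and> (\<forall>z w. ((\<lambda>w'. F z w') has_field_derivative G z w) (at w))"
  using assms
proof induction
  case (pconst c) then show ?case by (intro exI[of _ "\<lambda>z w. 0"]) (auto intro: pol.intros)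
next
  case pz then show ?case by (intro exI[of _ "\<lambda>z w. 0"]) (auto intro: pol.intros)
next
  case pw then show ?case by (intro exI[of _ "\<lambda>z w. 1"]) (auto intro: pol.intros)
next
  case (padd F G)
  then obtain F' G' where "pol F'" "pol G'" "\<forall>z w. ((\<lambda>w'. F z w') has_field_derivative F' z w) (at w)"
     "\<forall>z w. ((\<lambda>w'. G z w') has_field_derivative G' z w) (at w)" by blast
  then show ?case by (intro exI[of _ "\<lambda>z w. F' z w + G' z w"]) (auto intro: pol.intros derivative_intros)
next
  case (pmul F G)
  then obtain F' G' where "pol F'" "pol G'" "\<forall>z w. ((\<lambda>w'. F z w') has_field_derivative F' z w) (at w)"
     "\<forall>z w. ((\<lambda>w'. G z w') has_field_derivative G' z w) (at w)" by blast
  note d = this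
  show ?case
  proof (intro exI conjI allI)
    show "pol (\<lambda>z w. F z w * G' z w + F' z w * G z w)" by (intro pol.intros d pmul.hyps)
    fix z w
    show "((\<lambda>w'. F z w' * G z w') has_field_derivative F z w * G' z w + F' z w * G z w) (at w)"
      using DERIV_mult[OF d(3)[rule_format, of z w] d(4)[rule_format, of z w]]
      by (simp add: algebra_simps)
  qed
qed

lemma pol_deriv_z:
  assumes "pol F"
  shows "\<exists>G. pol G \<and> (\<forall>z w. ((\<lambda>z'. F z' w) has_field_derivative G z w) (at z))"
  using assms
proof induction
  case (pconst c) then show ?case by (intro exI[of _ "\<lambda>z w. 0"]) (auto intro: pol.intros)
next
  case pz then show ?case by (intro exI[of _ "\<lambda>z w. 1"]) (auto intro: pol.intros)
next
  case pw then show ?case by (intro exI[of _ "\<lambda>z w. 0"]) (auto intro: pol.intros)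
next
  case (padd F G)
  then obtain F' G' where "pol F'" "pol G'" "\<forall>z w. ((\<lambda>z'. F z' w) has_field_derivative F' z w) (at z)"
     "\<forall>z w. ((\<lambda>z'. G z' w) has_field_derivative G' z w) (at z)" by blast
  then show ?case by (intro exI[of _ "\<lambda>z w. F' z w + G' z w"]) (auto intro: pol.intros derivative_intros)
next
  case (pmul F G)
  then obtain F' G' where "pol F'" "pol G'" "\<forall>z w. ((\<lambda>z'. F z' w) has_field_derivative F' z w) (at z)"
     "\<forall>z w. ((\<lambda>z'. G z' w) has_field_derivative G' z w) (at z)" by blast
  note d = this
  show ?case
  proof (intro exI conjI allI)
    show "pol (\<lambda>z w. F z w * G' z w + F' z w * G z w)" by (intro pol.intros d pmul.hyps)
    fix z w
    show "((\<lambda>z'. F z' w * G z' w) has_field_derivative F z w * G' z w + F' z w * G z w) (at z)"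
      using DERIV_mult[OF d(3)[rule_format, of w z] d(4)[rule_format, of w z]]
      by (simp add: algebra_simps)
  qed
qed

lemma pol_diff: "pol (\<lambda>z w. z - w)"
proof -
  have "pol (\<lambda>z w. z + (-1) * w)" by (intro pol.intros)
  then show ?thesis by simp
qed

lemma pol_pow: "pol F \<Longrightarrow> pol (\<lambda>z w. F z w ^ n)"
proof (induction n)
  case 0 then show ?case using pconst[of 1] by simp
next
  case (Suc n) then show ?case using pmul[of F "\<lambda>z w. F z w ^ n"] by simp
qed

definition vd :: "nat \<Rightarrow> (complex \<Rightarrow> complex \<Rightarrow> complex) \<Rightarrow> bool" where
  "vd r F \<longleftrightarrow> (\<exists>G. pol G \<and> (\<forall>z w. F z w = (z - w) ^ r * G z w))"

lemma vd_deriv_w: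
  assumes "vd (Suc r) F"
  shows "vd r (\<lambda>z w. deriv (\<lambda>w'. F z w') w)"
proof -
  obtain G where G: "pol G" "\<And>z w. F z w = (z - w) ^ Suc r * G z w" using assms vd_def by blast
  obtain G' where G': "pol G'" "\<And>z w. ((\<lambda>w'. G z w') has_field_derivative G' z w) (at w)"
    using pol_deriv_w[OF G(1)] by blast
  have "deriv (\<lambda>w'. F z w') w = (z - w) ^ r * (- of_nat (Suc r) * G z w + (z - w) * G' z w)" for z w
  proof -
    have "((\<lambda>w'. (z - w') ^ Suc r * G z w') has_field_derivative
       (of_nat (Suc r) * (z - w) ^ r * (-1)) * G z w + (z - w) ^ Suc r * G' z w) (at w)"
      by (rule derivative_eq_intros refl G'(2))+ simp
    then have "((\<lambda>w'. F z w') has_field_derivative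
       (z - w) ^ r * (- of_nat (Suc r) * G z w + (z - w) * G' z w)) (at w)"
      by (simp add: G(2) algebra_simps)
    then show ?thesis by (rule DERIV_imp_deriv)
  qed
  moreover have "pol (\<lambda>z w. - of_nat (Suc r) * G z w + (z - w) * G' z w)"
    by (intro pol.intros G G' pol_diff)
  ultimately show ?thesis unfolding vd_def by blast
qed

lemma vd_deriv_z:
  assumes "vd (Suc r) F"
  shows "vd r (\<lambda>z w. deriv (\<lambda>z'. F z' w) z)"
proof -
  obtain G where G: "pol G" "\<And>z w. F z w = (z - w) ^ Suc r * G z w" using assms vd_def by blast
  obtain G' where G': "pol G'" "\<And>z w. ((\<lambda>z'. G z' w) has_field_derivative G' z w) (at z)"
    using pol_deriv_z[OF G(1)] by blast
  have "deriv (\<lambda>z'. F z' w) z = (z - w) ^ r * (of_nat (Suc r) * G z w + (z - w) * G' z w)" for z w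
  proof -
    have "((\<lambda>z'. (z' - w) ^ Suc r * G z' w) has_field_derivative
       (of_nat (Suc r) * (z - w) ^ r * 1) * G z w + (z - w) ^ Suc r * G' z w) (at z)"
      by (rule derivative_eq_intros refl G'(2))+ simp
    then have "((\<lambda>z'. F z' w) has_field_derivative
       (z - w) ^ r * (of_nat (Suc r) * G z w + (z - w) * G' z w)) (at z)"
      by (simp add: G(2) algebra_simps)
    then show ?thesis by (rule DERIV_imp_deriv)
  qed
  moreover have "pol (\<lambda>z w. of_nat (Suc r) * G z w + (z - w) * G' z w)"
    by (intro pol.intros G G' pol_diff)
  ultimately show ?thesis unfolding vd_def by blast
qed

lemma vd_iter_w: "vd (r + n) F \<Longrightarrow> vd r (\<lambda>z w. (deriv ^^ n) (\<lambda>w'. F z w') w)"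
proof (induction n arbitrary: r)
  case 0 then show ?case by simp
next
  case (Suc n)
  have "vd (Suc r) (\<lambda>z w. (deriv ^^ n) (\<lambda>w'. F z w') w)"
    using Suc.IH[of "Suc r"] Suc.prems by simp
  from vd_deriv_w[OF this] show ?case by simp
qed

lemma vd_iter_z: "vd (r + n) F \<Longrightarrow> vd r (\<lambda>z w. (deriv ^^ n) (\<lambda>z'. F z' w) z)"
proof (induction n arbitrary: r)
  case 0 then show ?case by simp
next
  case (Suc n)
  have "vd (Suc r) (\<lambda>z w. (deriv ^^ n) (\<lambda>z'. F z' w) z)"
    using Suc.IH[of "Suc r"] Suc.prems by simp
  from vd_deriv_z[OF this] show ?case by simp
qed

lemma vd_pder:
  assumes "vd k F" "m + n < k"
  shows "pder m n F z z = 0"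
proof -
  have "vd ((k - n - m) + m) (\<lambda>z w. (deriv ^^ n) (\<lambda>w'. F z w') w)"
    using vd_iter_w[of "k - n" n F] assms by simp
  from vd_iter_z[OF this] obtain G where
    "\<And>z w. (deriv ^^ m) (\<lambda>z'. (deriv ^^ n) (\<lambda>w'. F z' w') w) z = (z - w) ^ (k - n - m) * G z w"
    unfolding vd_def by blast
  then show ?thesis using assms(2) by (simp add: pder_def)
qed



lemma hom_support:
  fixes f :: "nat \<times> nat \<Rightarrow> 'b::{topological_comm_monoid_add,t2_space}"
  assumes "\<And>i l. i + l \<noteq> p \<Longrightarrow> f (i, l) = 0"
  shows "infsum f UNIV = (\<Sum>i\<le>p. f (i, p - i))" and "f summable_on UNIV"
proof -
  let ?T = "(\<lambda>i. (i, p - i)) ` {..p}"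
  have z: "x \<notin> ?T \<Longrightarrow> f x = 0" for x
  proof (cases x)
    case (Pair i l)
    assume "x \<notin> ?T"
    then have "i + l \<noteq> p" using Pair by (auto simp: image_iff)
    then show ?thesis using assms Pair by simp
  qed
  have "infsum f UNIV = infsum f ?T"
    by (rule infsum_cong_neutral) (use z in auto)
  also have "\<dots> = sum f ?T" by simp
  also have "\<dots> = (\<Sum>i\<le>p. f (i, p - i))"
    by (subst sum.reindex) (auto simp: inj_on_def)
  finally show "infsum f UNIV = (\<Sum>i\<le>p. f (i, p - i))" .
  show "f summable_on UNIV"
    by (rule finite_nonzero_values_imp_summable_on, rule finite_subset[of _ ?T]) (use z in auto)
qed

lemma alt_pascal:
  fixes g :: "nat \<Rightarrow> 'a::comm_ring_1"
  shows "(\<Sum>r\<le>Suc k. (-1) ^ (Suc k - r) * of_nat (Suc k choose r) * g r)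
       = (\<Sum>r\<le>k. (-1) ^ (k - r) * of_nat (k choose r) * (g (Suc r) - g r))"
proof -
  define A where "A = (\<Sum>r\<le>k. (-1) ^ (k - r) * of_nat (k choose r) * g r)"
  define B where "B = (\<Sum>r\<le>k. (-1) ^ (k - r) * of_nat (k choose r) * g (Suc r))"
  have e1: "(\<Sum>r\<le>Suc k. (-1) ^ (Suc k - r) * of_nat (k choose r) * g r) = - A"
    unfolding A_def sum_negf[symmetric] sum.atMost_Suc
    apply (simp add: binomial_eq_0)
    apply (rule sum.cong)
     apply (auto simp: Suc_diff_le)
    done
  have e2: "(\<Sum>r\<le>Suc k. (-1) ^ (Suc k - r) * of_nat (k choose r) * g r)
     = (-1) ^ Suc k * g 0 + (\<Sum>i\<le>k. (-1) ^ (k - i) * of_nat (k choose Suc i) * g (Suc i))"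
    by (subst sum.atMost_Suc_shift) simp
  have "(\<Sum>r\<le>Suc k. (-1) ^ (Suc k - r) * of_nat (Suc k choose r) * g r)
     = (-1) ^ Suc k * g 0 + (\<Sum>i\<le>k. (-1) ^ (k - i) * of_nat (Suc k choose Suc i) * g (Suc i))"
    by (subst sum.atMost_Suc_shift) simp
  also have "\<dots> = (-1) ^ Suc k * g 0 + (\<Sum>i\<le>k. (-1) ^ (k - i) * of_nat (k choose Suc i) * g (Suc i)) + B"
    unfolding B_def by (simp add: sum.distrib algebra_simps)
  also have "\<dots> = B - A" using e1 e2 by simp
  also have "\<dots> = (\<Sum>r\<le>k. (-1) ^ (k - r) * of_nat (k choose r) * (g (Suc r) - g r))"
    unfolding A_def B_def by (simp add: sum_subtractf[symmetric] algebra_simps)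
  finally show ?thesis .
qed

lemma alt_binom_zero:
  "j < k \<Longrightarrow> (\<Sum>r\<le>k. (-1) ^ (k - r) * of_nat (k choose r) * of_nat ((a + r) choose j) :: 'a::comm_ring_1) = 0"
proof (induction k arbitrary: j a)
  case 0 then show ?case by simp
next
  case (Suc k)
  have "(\<Sum>r\<le>Suc k. (-1) ^ (Suc k - r) * of_nat (Suc k choose r) * (of_nat ((a + r) choose j) :: 'a))
      = (\<Sum>r\<le>k. (-1) ^ (k - r) * of_nat (k choose r) * (of_nat ((a + Suc r) choose j) - of_nat ((a + r) choose j)))"
    by (rule alt_pascal)
  also have "\<dots> = 0"
  proof (cases j)
    case 0 then show ?thesis by simp
  next
    case (Suc j')
    have "(\<Sum>r\<le>k. (-1) ^ (k - r) * of_nat (k choose r) * (of_nat ((a + Suc r) choose j) - of_nat ((a + r) choose j) :: 'a))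
        = (\<Sum>r\<le>k. (-1) ^ (k - r) * of_nat (k choose r) * of_nat ((a + r) choose j'))"
      using Suc by (intro sum.cong) simp_all
    also have "\<dots> = 0" using Suc.IH[of j' a] Suc.prems Suc by simp
    finally show ?thesis .
  qed
  finally show ?case .
qed

lemma tri_exists:
  fixes u :: "nat \<Rightarrow> complex"
  shows "\<exists>d. \<forall>i<K. u i = (\<Sum>j<K. of_nat (i choose j) * d j)"
proof (induction K)
  case 0 then show ?case by simp
next
  case (Suc K)
  then obtain d where d: "\<forall>i<K. u i = (\<Sum>j<K. of_nat (i choose j) * d j)" by blast
  define d' where "d' = d(K := u K - (\<Sum>j<K. of_nat (K choose j) * d j))"
  have "u i = (\<Sum>j<Suc K. of_nat (i choose j) * d' j)" if "i < Suc K" for i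
  proof (cases "i < K")
    case True
    have "(\<Sum>j<Suc K. of_nat (i choose j) * d' j) = (\<Sum>j<K. of_nat (i choose j) * d j)"
      using True by (simp add: d'_def)
    then show ?thesis using d True by simp
  next
    case False
    then have "i = K" using that by simp
    then show ?thesis by (simp add: d'_def)
  qed
  then show ?case by blast
qed



lemma diffs_iter:
  fixes c :: "nat \<Rightarrow> complex"
  shows "(diffs ^^ j) c n = of_nat (fact j * ((n + j) choose j)) * c (n + j)"
proof (induction j arbitrary: n)
  case 0 then show ?case by simp
next
  case (Suc j)
  have e: "Suc n * (fact j * (Suc n + j choose j)) = fact (Suc j) * (n + Suc j choose Suc j)"
  proof -
    have a: "Suc (n + j) * (n + j choose j) = (Suc (n + j) choose Suc j) * Suc j"
      by (rule Suc_times_binomial_eq)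
    have b: "(Suc (n + j) - j) * (Suc (n + j) choose j) = Suc (n + j) * ((Suc (n + j) - 1) choose j)"
      by (rule binomial_absorb_comp)
    have "Suc (n + j) - j = Suc n" by simp
    then have "Suc j * (n + Suc j choose Suc j) = Suc n * (Suc n + j choose j)"
      using a b by (simp add: mult.commute)
    then have h: "Suc j * (n + Suc j choose Suc j) = Suc n * (Suc n + j choose j)" .
    have "fact (Suc j) * (n + Suc j choose Suc j) = fact j * (Suc j * (n + Suc j choose Suc j))"
      by (simp add: fact_Suc algebra_simps)
    also have "\<dots> = Suc n * (fact j * (Suc n + j choose j))"
      unfolding h by (simp add: algebra_simps)
    finally show ?thesis by simp
  qed
  have "(diffs ^^ Suc j) c n = of_nat (Suc n) * (diffs ^^ j) c (Suc n)"
    by (simp add: diffs_def)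
  also have "\<dots> = of_nat (Suc n * (fact j * (Suc n + j choose j))) * c (n + Suc j)"
    using Suc by (simp add: algebra_simps)
  also have "\<dots> = of_nat (fact (Suc j) * (n + Suc j choose Suc j)) * c (n + Suc j)"
    by (simp only: e)
  finally show ?case .
qed



lemma powser_higher_deriv:
  fixes c :: "nat \<Rightarrow> complex" and g :: "complex \<Rightarrow> complex"
  assumes eq: "\<And>z. norm z < K \<Longrightarrow> g z = (\<Sum>n. c n * z ^ n)"
      and sm: "\<And>z. norm z < K \<Longrightarrow> summable (\<lambda>n. c n * z ^ n)"
  shows "\<forall>z. norm z < K \<longrightarrow> (deriv ^^ j) g z = (\<Sum>n. (diffs ^^ j) c n * z ^ n)
             \<and> summable (\<lambda>n. (diffs ^^ j) c n * z ^ n)"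
proof (induction j)
  case 0 then show ?case using eq sm by simp
next
  case (Suc j)
  show ?case
  proof (intro allI impI conjI)
    fix z :: complex assume z: "norm z < K"
    have smj: "\<And>x. norm x < K \<Longrightarrow> summable (\<lambda>n. (diffs ^^ j) c n * x ^ n)" using Suc by blast
    have "((\<lambda>x. \<Sum>n. (diffs ^^ j) c n * x ^ n) has_field_derivative
            (\<Sum>n. diffs ((diffs ^^ j) c) n * z ^ n)) (at z)"
      by (rule termdiffs_strong'[OF smj z])
    then have "((deriv ^^ j) g has_field_derivative (\<Sum>n. diffs ((diffs ^^ j) c) n * z ^ n)) (at z)"
      by (rule has_field_derivative_transform_within_open[where S="ball 0 K"])
         (use z Suc in auto)
    then have "deriv ((deriv ^^ j) g) z = (\<Sum>n. diffs ((diffs ^^ j) c) n * z ^ n)"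
      by (rule DERIV_imp_deriv)
    then show "(deriv ^^ Suc j) g z = (\<Sum>n. (diffs ^^ Suc j) c n * z ^ n)" by simp
    show "summable (\<lambda>n. (diffs ^^ Suc j) c n * z ^ n)"
      using termdiff_converges[OF z smj] by simp
  qed
qed

lemma powser_zero_unique:
  fixes a :: "nat \<Rightarrow> complex"
  assumes r: "r > 0" and sm: "\<And>t. cmod t < r \<Longrightarrow> (\<lambda>n. a n * t ^ n) sums 0"
  shows "a m = 0"
proof (rule ccontr)
  assume am: "a m \<noteq> 0"
  show False
  proof (cases "m = 0")
    case True
    from sm[of 0] r have "a 0 = 0" by simp
    then show False using am True by simp
  next
    case False
    show False
    proof (rule powser_0_nonzero[where r=r and a=a and \<xi>=0 and f="\<lambda>_. 0" and m=m])
      fix s :: real assume s0: "0 < s" and nz: "\<And>z::complex. z \<in> cball 0 s - {0} \<Longrightarrow> (\<lambda>_. 0::complex) z \<noteq> 0"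
      show False using nz[of "complex_of_real s"] s0 by auto
    qed (use r sm am False in auto)
  qed
qed

lemma geom_norm_summable:
  fixes f :: "nat \<Rightarrow> complex"
  assumes "\<And>n. cmod (f n) \<le> M * (1/2) ^ n"
  shows "summable (\<lambda>n. norm (f n))"
proof (rule summable_comparison_test[where g="\<lambda>n. M * (1/2) ^ n"])
  show "\<exists>N. \<forall>n\<ge>N. norm (norm (f n)) \<le> M * (1/2) ^ n" using assms by auto
  show "summable (\<lambda>n. M * (1/2) ^ n :: real)"
    by (intro summable_mult summable_geometric) simp
qed

lemma geom_has_sum:
  assumes "M \<ge> 0"
  shows "((\<lambda>n. M * (1/2) ^ n :: real) has_sum (2 * M)) UNIV"
proof -
  have "(\<lambda>n. M * (1/2) ^ n :: real) sums (M * (1 / (1 - 1/2)))"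
    by (intro sums_mult geometric_sums) simp
  then have "(\<lambda>n. M * (1/2) ^ n :: real) sums (2 * M)" by (simp add: mult.commute)
  then show ?thesis by (rule sums_nonneg_imp_has_sum) (use assms in simp)
qed

lemma pair_geom_summable:
  fixes f :: "nat \<times> nat \<Rightarrow> complex"
  assumes "\<And>i l. cmod (f (i, l)) \<le> M * (1/2) ^ i * (1/2) ^ l"
  shows "f summable_on UNIV"
proof -
  have "cmod (f (0, 0)) \<le> M" using assms[of 0 0] by simp
  then have M: "M \<ge> 0" by (meson norm_ge_zero order_trans)
  let ?g = "\<lambda>(i, l). M * (1/2) ^ i * (1/2) ^ l :: real"
  have "?g summable_on Sigma UNIV (\<lambda>_. UNIV)"
  proof (rule summable_on_SigmaI[where g="\<lambda>i. 2 * (M * (1/2) ^ i)"])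
    fix i :: nat
    show "((\<lambda>l. ?g (i, l)) has_sum 2 * (M * (1/2) ^ i)) UNIV"
      using geom_has_sum[of "M * (1/2) ^ i"] M by simp
  next
    show "(\<lambda>i. 2 * (M * (1/2) ^ i :: real)) summable_on UNIV"
      using geom_has_sum[of "2 * M"] M by (simp add: summable_on_def mult.assoc) blast
  next
    fix i l show "0 \<le> ?g (i, l)" using M by simp
  qed
  then have g: "?g summable_on UNIV" by simp
  have "(\<lambda>x. norm (f x)) summable_on UNIV"
    by (rule summable_on_comparison_test[OF g]) (use assms in auto)
  then show ?thesis by (simp add: summable_on_iff_abs_summable_on_complex)
qed



lemma wt_pos: "(lam::real) > 0 \<Longrightarrow> wt lam l > 0"
  unfolding wt_def by (simp add: pochhammer_pos)

lemma poch_le: "(lam::real) > 0 \<Longrightarrow> pochhammer lam l \<le> (lam + 1) ^ l * fact l"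
proof (induction l)
  case 0 then show ?case by simp
next
  case (Suc l)
  have "pochhammer lam (Suc l) = pochhammer lam l * (lam + of_nat l)" by (rule pochhammer_Suc)
  also have "\<dots> \<le> ((lam + 1) ^ l * fact l) * ((lam + 1) * (of_nat l + 1))"
  proof (rule mult_mono)
    show "pochhammer lam l \<le> (lam + 1) ^ l * fact l" using Suc by simp
    show "lam + of_nat l \<le> (lam + 1) * (of_nat l + 1)" using Suc.prems by (simp add: algebra_simps)
    show "0 \<le> (lam + 1) ^ l * fact l" using Suc.prems by simp
    show "0 \<le> lam + real l" using Suc.prems by simp
  qed
  also have "\<dots> = (lam + 1) ^ Suc l * fact (Suc l)" by (simp add: algebra_simps)
  finally show ?case .
qed

lemma wt_lower: "(lam::real) > 0 \<Longrightarrow> 1 \<le> wt lam l * (lam + 1) ^ l"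
proof -
  assume lam: "lam > 0"
  have p: "pochhammer lam l > 0" using lam by (simp add: pochhammer_pos)
  have "pochhammer lam l \<le> (lam + 1) ^ l * fact l" by (rule poch_le[OF lam])
  then show ?thesis using p unfolding wt_def by (simp add: field_simps)
qed

lemma coeff_bound:
  assumes lam: "lam > 0" and b: "b \<in> Hspace lam"
  shows "\<exists>M\<ge>0. \<forall>i l. cmod (b i l) \<le> M * (lam + 1) ^ l"
proof -
  let ?f = "\<lambda>(i, j). (cmod (b i j))\<^sup>2 * wt lam j"
  have sm: "?f summable_on UNIV" using b by (simp add: Hspace_def)
  define S where "S = infsum ?f UNIV"
  have nn: "\<And>a c. 0 \<le> (cmod (b a c))\<^sup>2 * wt lam c"
    using wt_pos[OF lam] by (simp add: less_imp_le)
  have le: "?f (i, l) \<le> S" for i l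
  proof -
    have "infsum ?f {(i, l)} \<le> infsum ?f UNIV"
      by (rule infsum_mono_neutral) (use sm nn in auto)
    then show ?thesis by (simp add: S_def)
  qed
  have S0: "S \<ge> 0" using le[of 0 0] nn[of 0 0] by simp
  have "cmod (b i l) \<le> sqrt S * (lam + 1) ^ l" for i l
  proof -
    have w: "wt lam l > 0" by (rule wt_pos[OF lam])
    have "(cmod (b i l))\<^sup>2 * wt lam l \<le> S" using le[of i l] by simp
    then have "(cmod (b i l))\<^sup>2 \<le> S / wt lam l" using w by (simp add: field_simps)
    also have "\<dots> \<le> S * (lam + 1) ^ l"
    proof -
      have "1 / wt lam l \<le> (lam + 1) ^ l"
        using wt_lower[OF lam, of l] w by (simp add: divide_le_eq mult.commute)
      then have "S * (1 / wt lam l) \<le> S * (lam + 1) ^ l" using S0 by (rule mult_left_mono)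
      then show ?thesis by simp
    qed
    also have "\<dots> \<le> S * ((lam + 1) ^ l)\<^sup>2"
      using lam S0 by (intro mult_left_mono) (auto simp: power2_eq_square intro!: one_le_power)
    finally have "(cmod (b i l))\<^sup>2 \<le> (sqrt S * (lam + 1) ^ l)\<^sup>2"
      using S0 by (simp add: power_mult_distrib)
    moreover have "0 \<le> sqrt S * (lam + 1) ^ l" using S0 lam by simp
    ultimately show ?thesis by (rule power2_le_imp_le)
  qed
  then show ?thesis using S0 by (intro exI[of _ "sqrt S"]) auto
qed



lemma base_bound:
  assumes "cmod B \<le> M * q ^ l" "q \<ge> 1" "cmod x \<le> 1 / (4 * q)" "cmod y \<le> 1 / (4 * q)" "M \<ge> 0"
  shows "cmod (B * x ^ i * y ^ l) \<le> M * (1/4) ^ i * (1/4) ^ l"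
proof -
  have q0: "q > 0" using assms(2) by simp
  have xi: "cmod x ^ i \<le> (1/4) ^ i"
  proof (rule power_mono)
    have "1 / (4 * q) \<le> 1 / 4" using assms(2) by (simp add: field_simps)
    then show "cmod x \<le> 1/4" using assms(3) by simp
  qed simp
  have yl: "q ^ l * cmod y ^ l \<le> (1/4) ^ l"
  proof -
    have "q ^ l * cmod y ^ l = (q * cmod y) ^ l" by (simp add: power_mult_distrib)
    also have "\<dots> \<le> (1/4) ^ l"
    proof (rule power_mono)
      have "q * cmod y \<le> q * (1 / (4 * q))" using assms(4) q0 by (intro mult_left_mono) auto
      then show "q * cmod y \<le> 1/4" using q0 by simp
    qed (use q0 in simp)
    finally show ?thesis .
  qed
  have "cmod (B * x ^ i * y ^ l) = cmod B * cmod x ^ i * cmod y ^ l"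
    by (simp add: norm_mult norm_power)
  also have "\<dots> \<le> (M * q ^ l) * (1/4) ^ i * cmod y ^ l"
    by (intro mult_right_mono mult_mono assms(1) xi) (use assms(2) assms(5) in auto)
  also have "\<dots> = M * (1/4) ^ i * (q ^ l * cmod y ^ l)" by (simp add: algebra_simps)
  also have "\<dots> \<le> M * (1/4) ^ i * (1/4) ^ l"
    using yl assms(5) by (intro mult_left_mono) auto
  finally show ?thesis .
qed

lemma quarter_half: "M \<ge> 0 \<Longrightarrow> M * (1/4::real) ^ i * (1/4) ^ l \<le> M * (1/2) ^ i * (1/2) ^ l"
  by (intro mult_left_mono mult_mono power_mono) auto

lemma ana:
  assumes lam: "lam > 0" and b: "b \<in> Hspace lam"
    and van: "\<And>t. t \<in> ball 0 1 \<Longrightarrow> pder j 0 (fn b) t t = 0"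
  shows "(\<Sum>i\<le>p. of_nat (i choose j) * b i (p - i)) = 0"
proof -
  obtain M where M0: "M \<ge> 0" and Mb: "\<And>i l. cmod (b i l) \<le> M * (lam + 1) ^ l"
    using coeff_bound[OF lam b] by blast
  define q where "q = lam + 1"
  have q1: "q \<ge> 1" using lam by (simp add: q_def)
  define \<delta> where "\<delta> = 1 / (4 * q)"
  have d0: "\<delta> > 0" using q1 by (simp add: \<delta>_def)
  have d1: "\<delta> < 1" using q1 by (simp add: \<delta>_def field_simps)
  have bnd: "cmod (b i l * x ^ i * y ^ l) \<le> M * (1/4) ^ i * (1/4) ^ l"
    if "cmod x \<le> \<delta>" "cmod y \<le> \<delta>" for i l x y
    using base_bound[of "b i l" M q l x y i] Mb[of i l] that q1 M0 by (simp add: q_def \<delta>_def)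
  have bnd2: "cmod (b i l * x ^ i * y ^ l) \<le> M * (1/2) ^ i * (1/2) ^ l"
    if "cmod x \<le> \<delta>" "cmod y \<le> \<delta>" for i l x y
    using bnd[OF that, of i l] quarter_half[OF M0, of i l] by linarith
  define c where "c w i = (\<Sum>l. b i l * w ^ l)" for w i
  have c_sums: "(\<lambda>l. b i l * w ^ l) sums c w i" if w: "cmod w \<le> \<delta>" for w i
  proof -
    have "summable (\<lambda>l. norm (b i l * w ^ l))"
    proof (rule geom_norm_summable[where M=M])
      fix l
      have w': "cmod w \<le> 1 / (4 * q)" using w by (simp add: \<delta>_def)
      have z0: "cmod (0::complex) \<le> 1 / (4 * q)" using q1 by simp
      have Mq: "cmod (b i l) \<le> M * q ^ l" using Mb[of i l] by (simp add: q_def)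
      have "cmod (b i l * 0 ^ 0 * w ^ l) \<le> M * (1/4) ^ 0 * (1/4) ^ l"
        by (rule base_bound[OF Mq q1 z0 w' M0])
      moreover have "M * (1/4::real) ^ l \<le> M * (1/2) ^ l"
        using M0 by (intro mult_left_mono power_mono) auto
      ultimately show "cmod (b i l * w ^ l) \<le> M * (1/2) ^ l" by (simp only: power_0 mult_1_right)
    qed
    then have "summable (\<lambda>l. b i l * w ^ l)" by (rule summable_norm_cancel)
    then show ?thesis unfolding c_def by (rule summable_sums)
  qed
  have fn_ser: "(\<lambda>i. c w i * z ^ i) sums fn b z w" if z: "cmod z \<le> \<delta>" and w: "cmod w \<le> \<delta>" for z w
  proof -
    define F where "F = (\<lambda>(i, l). b i l * z ^ i * w ^ l)"
    have Fs: "F summable_on UNIV"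
      unfolding F_def by (rule pair_geom_summable[where M=M]) (use bnd2 z w in auto)
    have "(F has_sum fn b z w) (Sigma UNIV (\<lambda>_. UNIV))"
      using has_sum_infsum[OF Fs] by (simp add: fn_def F_def)
    moreover have "((\<lambda>l. F (i, l)) has_sum (c w i * z ^ i)) UNIV" for i
    proof (rule norm_summable_imp_has_sum)
      show "summable (\<lambda>l. norm (F (i, l)))"
        by (rule geom_norm_summable[where M="M * (1/2) ^ i"]) (use bnd2 z w in \<open>auto simp: F_def\<close>)
      have "(\<lambda>l. (b i l * w ^ l) * z ^ i) sums (c w i * z ^ i)"
        by (rule sums_mult2[OF c_sums[OF w]])
      then show "(\<lambda>l. F (i, l)) sums (c w i * z ^ i)" by (simp add: F_def algebra_simps)
    qed
    ultimately have "((\<lambda>i. c w i * z ^ i) has_sum fn b z w) UNIV"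
      by (rule has_sum_SigmaD)
    then show ?thesis by (rule has_sum_imp_sums)
  qed
  have psi: "(\<lambda>n. of_nat (fact j * ((n + j) choose j)) * c t (n + j) * t ^ n) sums 0"
    if t: "cmod t < \<delta>" for t
  proof -
    have "\<forall>z. norm z < \<delta> \<longrightarrow> (deriv ^^ j) (\<lambda>z'. fn b z' t) z = (\<Sum>n. (diffs ^^ j) (c t) n * z ^ n)
             \<and> summable (\<lambda>n. (diffs ^^ j) (c t) n * z ^ n)"
    proof (rule powser_higher_deriv)
      fix z :: complex assume "norm z < \<delta>"
      then have "(\<lambda>i. c t i * z ^ i) sums fn b z t" using fn_ser t by simp
      then show "fn b z t = (\<Sum>n. c t n * z ^ n)" "summable (\<lambda>n. c t n * z ^ n)"
        by (auto simp: sums_iff)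
    qed
    then have "(\<lambda>n. (diffs ^^ j) (c t) n * t ^ n) sums ((deriv ^^ j) (\<lambda>z'. fn b z' t) t)"
      using t by (auto simp: sums_iff)
    moreover have "(deriv ^^ j) (\<lambda>z'. fn b z' t) t = 0"
    proof -
      have "t \<in> ball 0 1" using t d1 by simp
      from van[OF this] show ?thesis by (simp add: pder_def)
    qed
    ultimately show ?thesis by (simp add: diffs_iter)
  qed
  have ser: "(\<lambda>p. (of_nat (fact j) * (\<Sum>i\<le>p. of_nat (i choose j) * b i (p - i))) * t ^ p) sums 0"
    if t: "cmod t < \<delta>" for t
  proof -
    define a where "a i = of_nat (fact j * (i choose j)) * c t i * t ^ i" for i
    have "(\<lambda>n. t ^ j * (of_nat (fact j * ((n + j) choose j)) * c t (n + j) * t ^ n)) sums (t ^ j * 0)"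
      by (rule sums_mult[OF psi[OF t]])
    then have "(\<lambda>n. a (n + j)) sums 0"
      by (simp add: a_def power_add algebra_simps)
    then have "a sums (0 + (\<Sum>i<j. a i))" by (simp add: sums_iff_shift)
    moreover have "(\<Sum>i<j. a i) = 0" by (simp add: a_def binomial_eq_0)
    ultimately have asum: "a sums 0" by simp
    define G where "G = (\<lambda>(i, l). of_nat (fact j * (i choose j)) * (b i l * t ^ i * t ^ l))"
    have Gb: "cmod (G (i, l)) \<le> (fact j * M) * (1/2) ^ i * (1/2) ^ l" for i l
    proof -
      have tt: "cmod t \<le> \<delta>" using t by simp
      have "cmod (G (i, l)) = of_nat (fact j * (i choose j)) * cmod (b i l * t ^ i * t ^ l)"
        by (simp add: G_def norm_mult)
      also have "\<dots> \<le> (fact j * 2 ^ i) * (M * (1/4) ^ i * (1/4) ^ l)"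
      proof (rule mult_mono)
        show "real (fact j * (i choose j)) \<le> fact j * 2 ^ i"
        proof -
          have "fact j * (i choose j) \<le> fact j * 2 ^ i" by (intro mult_left_mono binomial_le_pow2) auto
          then have "real (fact j * (i choose j)) \<le> real (fact j * 2 ^ i)" by (rule of_nat_mono)
          then show ?thesis by simp
        qed
        show "cmod (b i l * t ^ i * t ^ l) \<le> M * (1/4) ^ i * (1/4) ^ l" by (rule bnd[OF tt tt])
      qed (use M0 in auto)
      also have "\<dots> = (fact j * M) * ((2 ^ i * (1/4) ^ i) * (1/4) ^ l)" by (simp add: algebra_simps)
      also have "2 ^ i * (1/4::real) ^ i = (1/2) ^ i" by (simp add: power_mult_distrib[symmetric])
      also have "(fact j * M) * ((1/2) ^ i * (1/4::real) ^ l) \<le> (fact j * M) * ((1/2) ^ i * (1/2) ^ l)"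
        using M0 by (intro mult_left_mono mult_mono power_mono) auto
      finally show ?thesis by (simp add: mult.assoc)
    qed
    have Gs: "G summable_on UNIV" by (rule pair_geom_summable[OF Gb])
    have "(G has_sum infsum G UNIV) (Sigma UNIV (\<lambda>_. UNIV))"
      using has_sum_infsum[OF Gs] by simp
    moreover have "((\<lambda>l. G (i, l)) has_sum a i) UNIV" for i
    proof (rule norm_summable_imp_has_sum)
      show "summable (\<lambda>l. norm (G (i, l)))"
        by (rule geom_norm_summable[where M="(fact j * M) * (1/2) ^ i"]) (use Gb in \<open>simp add: mult.assoc\<close>)
      have "(\<lambda>l. (of_nat (fact j * (i choose j)) * t ^ i) * (b i l * t ^ l)) sums
              ((of_nat (fact j * (i choose j)) * t ^ i) * c t i)"
        by (rule sums_mult[OF c_sums]) (use t in simp)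
      then show "(\<lambda>l. G (i, l)) sums a i" by (simp add: G_def a_def algebra_simps)
    qed
    ultimately have "(a has_sum infsum G UNIV) UNIV" by (rule has_sum_SigmaD)
    then have "a sums infsum G UNIV" by (rule has_sum_imp_sums)
    with asum have G0: "infsum G UNIV = 0" by (simp add: sums_iff)
    have GS: "(G has_sum 0) UNIV" using has_sum_infsum[OF Gs] G0 by simp
    have "((\<lambda>(p, i). G (i, p - i)) has_sum 0) (Sigma UNIV (\<lambda>p. {..p}))"
      using GS by (subst has_sum_reindex_bij_witness[where j="\<lambda>(p, i). (i, p - i)"
            and i="\<lambda>(i, l). (i + l, i)" and T=UNIV and h=G and s'=0]) auto
    moreover have "((\<lambda>i. (\<lambda>(p, i). G (i, p - i)) (p, i)) has_sum (\<Sum>i\<le>p. G (i, p - i))) {..p}" for p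
      by (simp add: has_sum_finite)
    ultimately have "((\<lambda>p. \<Sum>i\<le>p. G (i, p - i)) has_sum 0) UNIV" by (rule has_sum_SigmaD)
    then have "(\<lambda>p. \<Sum>i\<le>p. G (i, p - i)) sums 0" by (rule has_sum_imp_sums)
    moreover have "(\<Sum>i\<le>p. G (i, p - i)) =
        (of_nat (fact j) * (\<Sum>i\<le>p. of_nat (i choose j) * b i (p - i))) * t ^ p" for p
    proof -
      have "(\<Sum>i\<le>p. G (i, p - i)) = (\<Sum>i\<le>p. (of_nat (fact j) * (of_nat (i choose j) * b i (p - i))) * t ^ p)"
      proof (rule sum.cong)
        fix i assume "i \<in> {..p}"
        then have "t ^ i * t ^ (p - i) = t ^ p" by (simp add: power_add[symmetric])
        then show "G (i, p - i) = (of_nat (fact j) * (of_nat (i choose j) * b i (p - i))) * t ^ p"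
          by (simp add: G_def algebra_simps)
      qed simp
      also have "\<dots> = (of_nat (fact j) * (\<Sum>i\<le>p. of_nat (i choose j) * b i (p - i))) * t ^ p"
        by (simp add: sum_distrib_left sum_distrib_right)
      finally show ?thesis .
    qed
    ultimately show ?thesis by simp
  qed
  have "of_nat (fact j) * (\<Sum>i\<le>p. of_nat (i choose j) * b i (p - i)) = 0"
    by (rule powser_zero_unique[OF d0 ser])
  then show ?thesis by simp
qed



definition gch :: "real \<Rightarrow> nat \<Rightarrow> real" where
  "gch lam m = ((real m + lam - 1) gchoose m)"

lemma gch_wt: "lam > 0 \<Longrightarrow> gch lam m * wt lam m = 1"
proof -
  assume lam: "lam > 0"
  have "gch lam m = pochhammer lam m / fact m"
    unfolding gch_def by (simp add: gbinomial_pochhammer')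
  moreover have "pochhammer lam m > 0" using lam by (simp add: pochhammer_pos)
  ultimately show ?thesis by (simp add: wt_def)
qed

lemma gch_pos: "lam > 0 \<Longrightarrow> gch lam m > 0"
proof -
  assume lam: "lam > 0"
  have "gch lam m = pochhammer lam m / fact m"
    unfolding gch_def by (simp add: gbinomial_pochhammer')
  moreover have "pochhammer lam m > 0" using lam by (simp add: pochhammer_pos)
  ultimately show ?thesis by simp
qed

lemma hcoef_eq: "hcoef lam j p i l = (if i + l = p then of_nat (i choose j) * of_real (gch lam (p - i)) else 0)"
  by (simp add: hcoef_def gch_def binomial_eq_0 not_le)

lemma alt_restrict:
  fixes g :: "nat \<Rightarrow> complex"
  assumes "a + k \<le> p"
  shows "(\<Sum>i\<le>p. (if a \<le> i \<and> i \<le> a + k then (-1) ^ (a + k - i) * of_nat (k choose (i - a)) else 0) * g i)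
       = (\<Sum>r\<le>k. (-1) ^ (k - r) * of_nat (k choose r) * g (a + r))"
proof -
  have "(\<Sum>i\<le>p. (if a \<le> i \<and> i \<le> a + k then (-1) ^ (a + k - i) * of_nat (k choose (i - a)) else 0) * g i)
      = (\<Sum>i\<in>{a..a+k}. (-1) ^ (a + k - i) * of_nat (k choose (i - a)) * g i)"
    by (rule sum.mono_neutral_cong_right) (use assms in auto)
  also have "\<dots> = (\<Sum>r\<in>{0..k}. (-1) ^ (a + k - (r + a)) * of_nat (k choose (r + a - a)) * g (r + a))"
    using sum.shift_bounds_cl_nat_ivl[of "\<lambda>i. (-1) ^ (a + k - i) * of_nat (k choose (i - a)) * g i" 0 a k]
    by (simp add: add.commute)
  also have "\<dots> = (\<Sum>r\<le>k. (-1) ^ (k - r) * of_nat (k choose r) * g (a + r))"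
    by (simp add: atLeast0AtMost add.commute)
  finally show ?thesis .
qed

definition tst :: "nat \<Rightarrow> nat \<Rightarrow> nat \<Rightarrow> coeffs" where
  "tst k a p = (\<lambda>i l. if i + l = p \<and> a \<le> i \<and> i \<le> a + k then (-1) ^ (a + k - i) * of_nat (k choose (i - a)) else 0)"

lemma tst_Hspace: "tst k a p \<in> Hspace lam"
  unfolding Hspace_def by (simp, rule hom_support(2)[where p=p]) (simp add: tst_def)

lemma tst_fn:
  assumes "a + k \<le> p"
  shows "fn (tst k a p) = (\<lambda>z w. (z - w) ^ k * (z ^ a * w ^ (p - k - a)))"
proof (intro ext)
  fix z w :: complex
  have "fn (tst k a p) z w = (\<Sum>i\<le>p. tst k a p i (p - i) * z ^ i * w ^ (p - i))"
    unfolding fn_def by (subst hom_support(1)[where p=p]) (auto simp: tst_def)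
  also have "\<dots> = (\<Sum>i\<le>p. (if a \<le> i \<and> i \<le> a + k then (-1) ^ (a + k - i) * of_nat (k choose (i - a)) else 0)
        * (z ^ i * w ^ (p - i)))"
    by (intro sum.cong) (auto simp: tst_def)
  also have "\<dots> = (\<Sum>r\<le>k. (-1) ^ (k - r) * of_nat (k choose r) * (z ^ (a + r) * w ^ (p - (a + r))))"
    by (rule alt_restrict[OF assms])
  also have "\<dots> = (\<Sum>r\<le>k. (of_nat (k choose r) * z ^ r * (- w) ^ (k - r)) * (z ^ a * w ^ (p - k - a)))"
  proof (rule sum.cong)
    fix r assume "r \<in> {..k}"
    then have r: "r \<le> k" by simp
    have e: "p - (a + r) = (k - r) + (p - k - a)" using r assms by simp
    show "(-1) ^ (k - r) * of_nat (k choose r) * (z ^ (a + r) * w ^ (p - (a + r)))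
        = (of_nat (k choose r) * z ^ r * (- w) ^ (k - r)) * (z ^ a * w ^ (p - k - a))"
      by (simp only: e power_add power_minus[of w]) (simp add: mult_ac)
  qed simp
  also have "\<dots> = (\<Sum>r\<le>k. of_nat (k choose r) * z ^ r * (- w) ^ (k - r)) * (z ^ a * w ^ (p - k - a))"
    by (simp only: sum_distrib_right)
  also have "\<dots> = (z + (- w)) ^ k * (z ^ a * w ^ (p - k - a))"
    by (simp only: binomial_ring)
  finally show "fn (tst k a p) z w = (z - w) ^ k * (z ^ a * w ^ (p - k - a))" by simp
qed

lemma tst_vanish:
  assumes "a + k \<le> p"
  shows "vanish_diag k (tst k a p)"
proof -
  have "vd k (fn (tst k a p))"
    unfolding tst_fn[OF assms] vd_def
    by (intro exI[of _ "\<lambda>z w. z ^ a * w ^ (p - k - a)"]) (auto intro!: pol.intros pol_pow)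
  then show ?thesis unfolding vanish_diag_def using vd_pder by blast
qed

lemma ip_hom:
  assumes "\<And>i l. i + l \<noteq> p \<Longrightarrow> f i l = 0"
  shows "ip lam f b = (\<Sum>i\<le>p. f i (p - i) * cnj (b i (p - i)) * of_real (wt lam (p - i)))"
  unfolding ip_def by (subst hom_support(1)[where p=p]) (auto simp: assms)



theorem lemma6p3:
  fixes lam :: real and p k :: nat
  assumes "lam > 0" and "k \<le> p + 1"
  shows "(\<forall>j<k. hcoef lam j p \<in> Vp k lam p)
    \<and> (\<forall>c :: nat \<Rightarrow> complex. (\<lambda>i l. \<Sum>j<k. c j * hcoef lam j p i l) = (\<lambda>i l. 0)
          \<longrightarrow> (\<forall>j<k. c j = 0))
    \<and> (\<forall>f \<in> Vp k lam p. \<exists>c :: nat \<Rightarrow> complex. f = (\<lambda>i l. \<Sum>j<k. c j * hcoef lam j p i l))"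
proof (intro conjI allI impI ballI)
  note lam = assms(1)
  have hz: "\<And>j i l. i + l \<noteq> p \<Longrightarrow> hcoef lam j p i l = 0" by (simp add: hcoef_def)
  fix j assume jk: "j < k"
  show "hcoef lam j p \<in> Vp k lam p"
    unfolding Vp_def V_def Hom_def
  proof (intro IntI CollectI conjI allI impI ballI)
    show hs: "hcoef lam j p \<in> Hspace lam"
      unfolding Hspace_def by (simp, rule hom_support(2)[where p=p]) (simp add: hz)
    show "hcoef lam j p \<in> Hspace lam" by (rule hs)
    fix i l assume "i + l \<noteq> p" then show "hcoef lam j p i l = 0" by (rule hz)
  next
    fix b assume b: "b \<in> Hspace lam" and vb: "vanish_diag k b"
    have van: "\<And>t. t \<in> ball 0 1 \<Longrightarrow> pder j 0 (fn b) t t = 0"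
      using vb jk unfolding vanish_diag_def by simp
    have e0: "(\<Sum>i\<le>p. of_nat (i choose j) * b i (p - i)) = 0" by (rule ana[OF lam b van])
    have "ip lam (hcoef lam j p) b = (\<Sum>i\<le>p. hcoef lam j p i (p - i) * cnj (b i (p - i)) * of_real (wt lam (p - i)))"
      by (rule ip_hom) (rule hz)
    also have "\<dots> = (\<Sum>i\<le>p. of_nat (i choose j) * cnj (b i (p - i)))"
    proof (rule sum.cong)
      fix i assume "i \<in> {..p}"
      have gw: "gch lam (p - i) * wt lam (p - i) = 1" by (rule gch_wt[OF lam])
      have "hcoef lam j p i (p - i) * cnj (b i (p - i)) * of_real (wt lam (p - i))
          = of_nat (i choose j) * cnj (b i (p - i)) * of_real (gch lam (p - i) * wt lam (p - i))"
        using \<open>i \<in> {..p}\<close> by (simp add: hcoef_eq mult_ac)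
      then show "hcoef lam j p i (p - i) * cnj (b i (p - i)) * of_real (wt lam (p - i))
          = of_nat (i choose j) * cnj (b i (p - i))" by (simp add: gw)
    qed simp
    also have "\<dots> = cnj (\<Sum>i\<le>p. of_nat (i choose j) * b i (p - i))" by simp
    also have "\<dots> = 0" by (simp add: e0)
    finally show "ip lam (hcoef lam j p) b = 0" .
  qed
next
  note lam = assms(1)
  fix c :: "nat \<Rightarrow> complex" and jj :: nat
  assume h0: "(\<lambda>i l. \<Sum>j<k. c j * hcoef lam j p i l) = (\<lambda>i l. 0)" and jjk: "jj < k"
  have h: "\<And>i l. (\<Sum>j<k. c j * hcoef lam j p i l) = 0" using h0 by meson
  have "\<forall>j<k. c j = 0"
  proof (intro allI impI)
    fix j show "j < k \<Longrightarrow> c j = 0"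
    proof (induction j rule: less_induct)
      case (less j)
      have jp: "j \<le> p" using less.prems assms(2) by simp
      have "(\<Sum>j'<k. c j' * hcoef lam j' p j (p - j)) = (\<Sum>j'<k. if j' = j then c j * of_real (gch lam (p - j)) else 0)"
      proof (rule sum.cong)
        fix j' assume j': "j' \<in> {..<k}"
        show "c j' * hcoef lam j' p j (p - j) = (if j' = j then c j * of_real (gch lam (p - j)) else 0)"
        proof (cases "j' < j")
          case True
          then have "c j' = 0" using less.IH j' by simp
          then show ?thesis using True by simp
        next
          case False
          then show ?thesis using jp by (auto simp: hcoef_eq binomial_eq_0)
        qed
      qed simp
      also have "\<dots> = c j * of_real (gch lam (p - j))" using less.prems by simp
      finally have "c j * of_real (gch lam (p - j)) = 0" using h[of j "p - j"] by simp
      moreover have "gch lam (p - j) \<noteq> 0" using gch_pos[OF lam] by (simp add: less_imp_neq[symmetric])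
      ultimately show "c j = 0" by simp
    qed
  qed
  then show "c jj = 0" using jjk by simp
next
  note lam = assms(1)
  fix f assume fV: "f \<in> Vp k lam p"
  then have fH: "f \<in> Hspace lam" and fz: "\<And>i l. i + l \<noteq> p \<Longrightarrow> f i l = 0"
    and fo: "\<And>b. b \<in> Hspace lam \<Longrightarrow> vanish_diag k b \<Longrightarrow> ip lam f b = 0"
    unfolding Vp_def V_def Hom_def by auto
  define u where "u i = f i (p - i) * of_real (wt lam (p - i))" for i
  obtain d where d: "\<forall>i<k. u i = (\<Sum>j<k. of_nat (i choose j) * d j)" using tri_exists by blast
  define v where "v i = u i - (\<Sum>j<k. of_nat (i choose j) * d j)" for i
  have rec: "(\<Sum>r\<le>k. (-1) ^ (k - r) * of_nat (k choose r) * v (a + r)) = 0" if a: "a + k \<le> p" for a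
  proof -
    have "ip lam f (tst k a p) = 0" by (rule fo[OF tst_Hspace tst_vanish[OF a]])
    moreover have "ip lam f (tst k a p) = (\<Sum>i\<le>p. (if a \<le> i \<and> i \<le> a + k then (-1) ^ (a + k - i) * of_nat (k choose (i - a)) else 0) * u i)"
    proof -
      have "ip lam f (tst k a p) = (\<Sum>i\<le>p. f i (p - i) * cnj (tst k a p i (p - i)) * of_real (wt lam (p - i)))"
        by (rule ip_hom) (rule fz)
      also have "\<dots> = (\<Sum>i\<le>p. (if a \<le> i \<and> i \<le> a + k then (-1) ^ (a + k - i) * of_nat (k choose (i - a)) else 0) * u i)"
        by (intro sum.cong) (auto simp: tst_def u_def)
      finally show ?thesis .
    qed
    ultimately have u0: "(\<Sum>r\<le>k. (-1) ^ (k - r) * of_nat (k choose r) * u (a + r)) = 0"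
      using alt_restrict[OF a, of u] by simp
    have p0: "(\<Sum>r\<le>k. (-1) ^ (k - r) * of_nat (k choose r) * (\<Sum>j<k. of_nat ((a + r) choose j) * d j)) = (0::complex)"
    proof -
      have "(\<Sum>r\<le>k. (-1) ^ (k - r) * of_nat (k choose r) * (\<Sum>j<k. of_nat ((a + r) choose j) * d j))
          = (\<Sum>j<k. d j * (\<Sum>r\<le>k. (-1) ^ (k - r) * of_nat (k choose r) * of_nat ((a + r) choose j)))"
        by (simp add: sum_distrib_left sum_distrib_right mult_ac sum.swap[of _ "{..k}"])
      also have "\<dots> = 0" by (simp add: alt_binom_zero)
      finally show ?thesis .
    qed
    have "(\<Sum>r\<le>k. (-1) ^ (k - r) * of_nat (k choose r) * v (a + r))
        = (\<Sum>r\<le>k. (-1) ^ (k - r) * of_nat (k choose r) * u (a + r))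
          - (\<Sum>r\<le>k. (-1) ^ (k - r) * of_nat (k choose r) * (\<Sum>j<k. of_nat ((a + r) choose j) * d j))"
      by (simp add: v_def sum_subtractf[symmetric] algebra_simps)
    then show ?thesis using u0 p0 by simp
  qed
  have v0: "i \<le> p \<Longrightarrow> v i = 0" for i
  proof (induction i rule: less_induct)
    case (less i)
    show ?case
    proof (cases "i < k")
      case True then show ?thesis using d by (simp add: v_def)
    next
      case False
      define a where "a = i - k"
      have a: "a + k \<le> p" and ia: "i = a + k" using False less.prems by (auto simp: a_def)
      have "(\<Sum>r\<le>k. (-1) ^ (k - r) * of_nat (k choose r) * v (a + r)) = v i"
      proof -
        have "(\<Sum>r\<le>k. (-1) ^ (k - r) * of_nat (k choose r) * v (a + r))
          = (\<Sum>r<k. (-1) ^ (k - r) * of_nat (k choose r) * v (a + r)) + v (a + k)"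
          by (simp add: lessThan_Suc_atMost[symmetric])
        moreover have "(\<Sum>r<k. (-1) ^ (k - r) * of_nat (k choose r) * v (a + r)) = 0"
          by (intro sum.neutral ballI) (use less.IH ia less.prems in auto)
        ultimately show ?thesis using ia by simp
      qed
      then show ?thesis using rec[OF a] by simp
    qed
  qed
  show "\<exists>c. f = (\<lambda>i l. \<Sum>j<k. c j * hcoef lam j p i l)"
  proof (intro exI ext)
    fix i l
    show "f i l = (\<Sum>j<k. d j * hcoef lam j p i l)"
    proof (cases "i + l = p")
      case False then show ?thesis by (simp add: fz hcoef_def)
    next
      case True
      then have l: "l = p - i" and ip: "i \<le> p" by auto
      have gw: "gch lam (p - i) * wt lam (p - i) = 1" by (rule gch_wt[OF lam])
      have "f i l = u i * of_real (gch lam (p - i))"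
      proof -
        have "u i * of_real (gch lam (p - i)) = f i (p - i) * of_real (gch lam (p - i) * wt lam (p - i))"
          by (simp add: u_def mult_ac)
        then show ?thesis using gw l by simp
      qed
      also have "\<dots> = (\<Sum>j<k. of_nat (i choose j) * d j) * of_real (gch lam (p - i))"
        using v0[OF ip] by (simp add: v_def)
      also have "\<dots> = (\<Sum>j<k. d j * hcoef lam j p i l)"
        using True by (simp add: hcoef_eq sum_distrib_left mult_ac)
      finally show ?thesis .
    qed
  qed
qed

end
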